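(* A CFM process $p$ satisfies DNI if and only if every sequential process $p_i$ in the support $\mathrm{dom}(\mathrm{dec}(p))$ satisfies DNI.
   Context: Fix a finite set of actions $Act = H \cup L \cup \{\tau\}$, where $H$ (high-level actions) and $L$ (low-level actions) are disjoint and $\tau$ is the silent action; $\mu$ ranges over $Act$, $h$ over $H$. Fix a finite set of process constants disjoint from $Act$. CFM terms: guarded $s ::= \mathbf{0} \mid \mu.q \mid s+s$; sequential $q ::= s \mid C$; parallel $p ::= q \mid p \,|\, p$. A CFM process is a term all of whose constants have a defining equation $C \doteq s$ with $s$ guarded. LTS rules: $\mu.p \xrightarrow{\mu} p$; if $p \xrightarrow{\mu} p'$ and $C \doteq p$ then $C \xrightarrow{\mu} p'$; if $p \xrightarrow{\mu} p'$ then $p+q \xrightarrow{\mu} p'$ and $q+p \xrightarrow{\mu} p'$; if $p \xrightarrow{\mu} p'$ then $p\,|\,q \xrightarrow{\mu} p'\,|\,q$ and $q\,|\,p \xrightarrow{\mu} q\,|\,p'$. Reachability is in this LTS. An FSM is $N=(S,A,T)$ with finite places $S$, finite labels $A\ni\tau$, and $T \subseteq S \times A \times (S \cup \{\theta\})$ ($\theta$ the empty multiset). Markings are finite multisets over $S$; a transition $(s,\ell,m)$ is enabled at $m_1$ if $s\in m_1$ and firing gives $m_1 \xrightarrow{\ell} (m_1\ominus s)\oplus m$. Net semantics: places are sequential CFM processes other than $\mathbf{0}$; $\mathrm{dec}(\mathbf{0})=\theta$, $\mathrm{dec}(\mu.p)=\{\mu.p\}$, $\mathrm{dec}(p+p')=\{p+p'\}$,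 $\mathrm{dec}(C)=\{C\}$, $\mathrm{dec}(p\,|\,p')=\mathrm{dec}(p)\oplus\mathrm{dec}(p')$; $\mathrm{dom}(m)$ is the set of places with nonzero multiplicity in $m$. The net $[\![p]\!]$ has initial marking $\mathrm{dec}(p)$, all places and transitions reachable from it, and transitions $(s,\mu,\mathrm{dec}(s'))$ for reachable places $s$ with $s\xrightarrow{\mu}s'$ in the LTS. The net $[\![p\setminus H]\!]$ is obtained by renaming each place $s$ as $s\setminus H$, removing transitions labelled in $H$, and taking initial marking $\mathrm{dec}(p)\setminus H$ (elementwise renaming; similarly $m\setminus H$ for any marking $m$). Branching bisimilarity $\approx$ on places of an FSM: $s\Rightarrow^\epsilon m$ is the reflexive-transitive closure of $\tau$-steps. $R\subseteq S\times S$ is a branching bisimulation if whenever $(s_1,s_2)\in R$ and $s_1\xrightarrow{\ell}m_1$: either $\ell=\tau$ and $\exists m_2$, $s_2\Rightarrow^\epsilon m_2$ with $(s_1,m_2),(m_1,m_2)\in R$; or $\exists s,m_2$ with $s_2\Rightarrow^\epsilon s\xrightarrow{\ell}m_2$, $(s_1,s)\in R$ and either $m_1=\theta=m_2$ or $(m_1,m_2)\in R$; and symmetrically. $\approx$ is the union of all branching bisimulations. The additive closure $R^\oplus$ is the least marking relation with $(\theta,\theta)\in R^\oplus$ and closed under $(s_1,s_2)\in R,(m_1,m_2)\in R^\oplus \Rightarrow (s_1\oplus m_1,s_2\oplus m_2)\in R^\oplus$. Branching team equivalence is $\approx^\oplus$; for processes, $p\approx^\oplus q$ iff $\mathrm{dec}(p)\approx^\oplus\mathrm{dec}(q)$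 in the union of their nets, and $p'\setminus H\approx^\oplus p''\setminus H$ iff $\mathrm{dec}(p')\setminus H\approx^\oplus\mathrm{dec}(p'')\setminus H$ in the union of their restricted nets. DNI: a CFM process $p$ satisfies DNI if for all $p',p''$ reachable from $p$ and $h\in H$ with $p'\xrightarrow{h}p''$, $p'\setminus H\approx^\oplus p''\setminus H$; equivalently, for all markings $m_1,m_2$ reachable from $\mathrm{dec}(p)$ in $[\![p]\!]$ and $h\in H$ with $m_1\xrightarrow{h}m_2$, $m_1\setminus H \approx^\oplus m_2\setminus H$ in $[\![p\setminus H]\!]$. *)

theory Defs
  imports Main "HOL-Library.Multiset"
begin

text \<open>Actions: the silent action Tau, or a visible action Vis a.  High-level
actions are those Vis h with h in a set H; low-level ones are the other
visible actions (so H and L are disjoint).\<close>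
datatype 'a act = Tau | Vis 'a

datatype ('a, 'c) proc =
    PNil
  | Pre "'a act" "('a, 'c) proc"
  | Sum "('a, 'c) proc" "('a, 'c) proc"
  | Cst 'c
  | Par "('a, 'c) proc" "('a, 'c) proc"

inductive guarded :: "('a, 'c) proc \<Rightarrow> bool"
  and seqp :: "('a, 'c) proc \<Rightarrow> bool" where
  g_nil: "guarded PNil"
| g_pre: "seqp q \<Longrightarrow> guarded (Pre \<mu> q)"
| g_sum: "guarded s \<Longrightarrow> guarded t \<Longrightarrow> guarded (Sum s t)"
| s_grd: "guarded s \<Longrightarrow> seqp s"
| s_cst: "seqp (Cst C)"

inductive parp :: "('a, 'c) proc \<Rightarrow> bool" where
  p_seq: "seqp q \<Longrightarrow> parp q"
| p_par: "parp p \<Longrightarrow> parp q \<Longrightarrow> parp (Par p q)"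

definition defs_ok :: "('c \<Rightarrow> ('a, 'c) proc) \<Rightarrow> bool" where
  "defs_ok \<Delta> \<longleftrightarrow> (\<forall>C. guarded (\<Delta> C))"

definition cfm :: "('c \<Rightarrow> ('a, 'c) proc) \<Rightarrow> ('a, 'c) proc \<Rightarrow> bool" where
  "cfm \<Delta> p \<longleftrightarrow> defs_ok \<Delta> \<and> parp p"

inductive step :: "('c \<Rightarrow> ('a, 'c) proc) \<Rightarrow> ('a, 'c) proc \<Rightarrow> 'a act \<Rightarrow> ('a, 'c) proc \<Rightarrow> bool"
  for \<Delta> where
  st_pre: "step \<Delta> (Pre \<mu> p) \<mu> p"
| st_cst: "step \<Delta> (\<Delta> C) \<mu> p' \<Longrightarrow> step \<Delta> (Cst C) \<mu> p'"
| st_suml: "step \<Delta> p \<mu> p' \<Longrightarrow> step \<Delta> (Sum p q) \<mu> p'"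
| st_sumr: "step \<Delta> p \<mu> p' \<Longrightarrow> step \<Delta> (Sum q p) \<mu> p'"
| st_parl: "step \<Delta> p \<mu> p' \<Longrightarrow> step \<Delta> (Par p q) \<mu> (Par p' q)"
| st_parr: "step \<Delta> p \<mu> p' \<Longrightarrow> step \<Delta> (Par q p) \<mu> (Par q p')"

definition reach :: "('c \<Rightarrow> ('a, 'c) proc) \<Rightarrow> ('a, 'c) proc \<Rightarrow> ('a, 'c) proc \<Rightarrow> bool" where
  "reach \<Delta> = (\<lambda>p q. \<exists>\<mu>. step \<Delta> p \<mu> q)\<^sup>*\<^sup>*"

fun dec :: "('a, 'c) proc \<Rightarrow> ('a, 'c) proc multiset" where
  "dec PNil = {#}"
| "dec (Pre \<mu> p) = {# Pre \<mu> p #}"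
| "dec (Sum p q) = {# Sum p q #}"
| "dec (Cst C) = {# Cst C #}"
| "dec (Par p q) = dec p + dec q"

definition places :: "('a, 'c) proc set" where
  "places = {s. seqp s \<and> s \<noteq> PNil}"

text \<open>Target of a net transition: the empty multiset (None) or one place.\<close>
definition tgt :: "('a, 'c) proc \<Rightarrow> ('a, 'c) proc option" where
  "tgt s' = (if s' = PNil then None else Some s')"

text \<open>Transitions of the restricted net [[p \ H]] (places renamed s\H
identified with s, since the renaming is a bijection): the net transitions
(s, mu, dec s') not labelled by a high action.\<close>
definition rtrans :: "('c \<Rightarrow> ('a, 'c) proc) \<Rightarrow> 'a set \<Rightarrow>
    ('a, 'c) proc \<Rightarrow> 'a act \<Rightarrow> ('a, 'c) proc option \<Rightarrow> bool" where
  "rtrans \<Delta> H s l m \<longleftrightarrow> s \<in> places \<and> (\<forall>h\<in>H. l \<noteq> Vis h) \<and>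
      (\<exists>s'. step \<Delta> s l s' \<and> m = tgt s')"

definition eps :: "('s \<Rightarrow> 'l \<Rightarrow> 's option \<Rightarrow> bool) \<Rightarrow> 'l \<Rightarrow> 's option \<Rightarrow> 's option \<Rightarrow> bool" where
  "eps T tau = (\<lambda>x y. \<exists>s. x = Some s \<and> T s tau y)\<^sup>*\<^sup>*"

definition bb_half :: "('s \<Rightarrow> 'l \<Rightarrow> 's option \<Rightarrow> bool) \<Rightarrow> 'l \<Rightarrow> ('s \<times> 's) set \<Rightarrow> bool" where
  "bb_half T tau R \<longleftrightarrow> (\<forall>(s1, s2) \<in> R. \<forall>l m1. T s1 l m1 \<longrightarrow>
     (l = tau \<and> (\<exists>m2. eps T tau (Some s2) (Some m2) \<and> (s1, m2) \<in> R \<and>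
                       (\<exists>m1'. m1 = Some m1' \<and> (m1', m2) \<in> R)))
   \<or> (\<exists>s m2. eps T tau (Some s2) (Some s) \<and> T s l m2 \<and> (s1, s) \<in> R \<and>
        ((m1 = None \<and> m2 = None) \<or> (\<exists>a b. m1 = Some a \<and> m2 = Some b \<and> (a, b) \<in> R))))"

definition bbisim :: "'s set \<Rightarrow> ('s \<Rightarrow> 'l \<Rightarrow> 's option \<Rightarrow> bool) \<Rightarrow> 'l \<Rightarrow> ('s \<times> 's) set \<Rightarrow> bool" where
  "bbisim S T tau R \<longleftrightarrow> R \<subseteq> S \<times> S \<and> bb_half T tau R \<and> bb_half T tau (R\<inverse>)"

definition bbisimilar :: "'s set \<Rightarrow> ('s \<Rightarrow> 'l \<Rightarrow> 's option \<Rightarrow> bool) \<Rightarrow> 'l \<Rightarrow> ('s \<times> 's) set" where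
  "bbisimilar S T tau = \<Union> {R. bbisim S T tau R}"

inductive_set add_closure :: "('s \<times> 's) set \<Rightarrow> ('s multiset \<times> 's multiset) set"
  for R where
  ac_empty: "({#}, {#}) \<in> add_closure R"
| ac_add: "(s1, s2) \<in> R \<Longrightarrow> (m1, m2) \<in> add_closure R \<Longrightarrow>
           (add_mset s1 m1, add_mset s2 m2) \<in> add_closure R"

definition rteam :: "('c \<Rightarrow> ('a, 'c) proc) \<Rightarrow> 'a set \<Rightarrow>
    (('a, 'c) proc multiset \<times> ('a, 'c) proc multiset) set" where
  "rteam \<Delta> H = add_closure (bbisimilar places (rtrans \<Delta> H) Tau)"

definition DNI :: "('c \<Rightarrow> ('a, 'c) proc) \<Rightarrow> 'a set \<Rightarrow> ('a, 'c) proc \<Rightarrow> bool" where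
  "DNI \<Delta> H p \<longleftrightarrow> (\<forall>p' p'' h. reach \<Delta> p p' \<longrightarrow> h \<in> H \<longrightarrow> step \<Delta> p' (Vis h) p'' \<longrightarrow>
      (dec p', dec p'') \<in> rteam \<Delta> H)"

end

theory Submission
  imports Defs
begin

section \<open>Branching bisimilarity is an equivalence\<close>

lemma eps_trans: "eps T tau x y \<Longrightarrow> eps T tau y z \<Longrightarrow> eps T tau x z"
  unfolding eps_def by (rule rtranclp_trans)

lemma eps_snoc: "eps T tau x (Some s) \<Longrightarrow> T s tau y \<Longrightarrow> eps T tau x y"
  unfolding eps_def by (erule rtranclp.rtrancl_into_rtrancl) blast

lemma eps_refl: "eps T tau x x"
  unfolding eps_def by simp

lemma bb_halfD:
  assumes "bb_half T tau R" "(s1, s2) \<in> R" "T s1 l m1"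
  shows "(l = tau \<and> (\<exists>m2. eps T tau (Some s2) (Some m2) \<and> (s1, m2) \<in> R \<and>
                       (\<exists>m1'. m1 = Some m1' \<and> (m1', m2) \<in> R)))
   \<or> (\<exists>s m2. eps T tau (Some s2) (Some s) \<and> T s l m2 \<and> (s1, s) \<in> R \<and>
        ((m1 = None \<and> m2 = None) \<or> (\<exists>a b. m1 = Some a \<and> m2 = Some b \<and> (a, b) \<in> R)))"
  using assms unfolding bb_half_def by blast

lemma bb_halfI:
  assumes "\<And>s1 s2 l m1. (s1, s2) \<in> R \<Longrightarrow> T s1 l m1 \<Longrightarrow>
   (l = tau \<and> (\<exists>m2. eps T tau (Some s2) (Some m2) \<and> (s1, m2) \<in> R \<and>
                       (\<exists>m1'. m1 = Some m1' \<and> (m1', m2) \<in> R)))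
   \<or> (\<exists>s m2. eps T tau (Some s2) (Some s) \<and> T s l m2 \<and> (s1, s) \<in> R \<and>
        ((m1 = None \<and> m2 = None) \<or> (\<exists>a b. m1 = Some a \<and> m2 = Some b \<and> (a, b) \<in> R)))"
  shows "bb_half T tau R"
  using assms unfolding bb_half_def by blast

lemma half_eps:
  assumes h: "bb_half T tau R" and st: "(s, t) \<in> R" and e: "eps T tau (Some s) (Some s')"
  shows "\<exists>t'. eps T tau (Some t) (Some t') \<and> (s', t') \<in> R"
proof -
  have "\<forall>s'. y = Some s' \<longrightarrow> (\<exists>t'. eps T tau (Some t) (Some t') \<and> (s', t') \<in> R)"
    if "eps T tau (Some s) y" for y
    using that[unfolded eps_def]
  proof (induction rule: rtranclp_induct)
    case base
    then show ?case using st by (auto simp: eps_def)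
  next
    case (step y z)
    then obtain s0 where y: "y = Some s0" and tr: "T s0 tau z" by auto
    from step.IH y obtain t0 where e0: "eps T tau (Some t) (Some t0)" and r0: "(s0, t0) \<in> R"
      by blast
    show ?case
    proof (intro allI impI)
      fix s' assume z: "z = Some s'"
      from bb_halfD[OF h r0 tr]
      show "\<exists>t'. eps T tau (Some t) (Some t') \<and> (s', t') \<in> R"
      proof
        assume "tau = tau \<and> (\<exists>m2. eps T tau (Some t0) (Some m2) \<and> (s0, m2) \<in> R \<and>
                       (\<exists>m1'. z = Some m1' \<and> (m1', m2) \<in> R))"
        then obtain m2 where e1: "eps T tau (Some t0) (Some m2)" and rm: "(s', m2) \<in> R" using z by auto
        show ?thesis using eps_trans[OF e0 e1] rm by blast
      next
        assume "\<exists>s m2. eps T tau (Some t0) (Some s) \<and> T s tau m2 \<and> (s0, s) \<in> R \<and>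
        ((z = None \<and> m2 = None) \<or> (\<exists>a b. z = Some a \<and> m2 = Some b \<and> (a, b) \<in> R))"
        then obtain s2 b where e1: "eps T tau (Some t0) (Some s2)" and t1: "T s2 tau (Some b)"
          and rb: "(s', b) \<in> R"
          using z by auto
        have "eps T tau (Some t) (Some b)" using eps_trans[OF e0 eps_snoc[OF e1 t1]] .
        then show ?thesis using rb by blast
      qed
    qed
  qed
  then show ?thesis using e by blast
qed

lemma half_comp:
  assumes hR: "bb_half T tau R" and hS: "bb_half T tau S"
  shows "bb_half T tau (R O S)"
proof (rule bb_halfI)
  fix s1 u l m1 assume "(s1, u) \<in> R O S" and tr: "T s1 l m1"
  then obtain t where st: "(s1, t) \<in> R" and tu: "(t, u) \<in> S" by blast
  from bb_halfD[OF hR st tr]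
  show "(l = tau \<and> (\<exists>m2. eps T tau (Some u) (Some m2) \<and> (s1, m2) \<in> R O S \<and>
                       (\<exists>m1'. m1 = Some m1' \<and> (m1', m2) \<in> R O S)))
   \<or> (\<exists>s m2. eps T tau (Some u) (Some s) \<and> T s l m2 \<and> (s1, s) \<in> R O S \<and>
        ((m1 = None \<and> m2 = None) \<or> (\<exists>a b. m1 = Some a \<and> m2 = Some b \<and> (a, b) \<in> R O S)))"
    (is "?A \<or> ?B")
  proof
    assume "l = tau \<and> (\<exists>m2. eps T tau (Some t) (Some m2) \<and> (s1, m2) \<in> R \<and>
                       (\<exists>m1'. m1 = Some m1' \<and> (m1', m2) \<in> R))"
    then obtain t' m1' where l: "l = tau" and e: "eps T tau (Some t) (Some t')"
      and r1: "(s1, t') \<in> R" and m1: "m1 = Some m1'" and r2: "(m1', t') \<in> R" by blast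
    from half_eps[OF hS tu e] obtain u' where "eps T tau (Some u) (Some u')" "(t', u') \<in> S"
      by blast
    then have ?A using l r1 m1 r2 by blast
    then show ?thesis ..
  next
    assume "\<exists>s m2. eps T tau (Some t) (Some s) \<and> T s l m2 \<and> (s1, s) \<in> R \<and>
        ((m1 = None \<and> m2 = None) \<or> (\<exists>a b. m1 = Some a \<and> m2 = Some b \<and> (a, b) \<in> R))"
    then obtain t2 m2 where e: "eps T tau (Some t) (Some t2)" and tr2: "T t2 l m2"
      and r1: "(s1, t2) \<in> R"
      and mm: "(m1 = None \<and> m2 = None) \<or> (\<exists>a b. m1 = Some a \<and> m2 = Some b \<and> (a, b) \<in> R)"
      by blast
    from half_eps[OF hS tu e] obtain u2 where e2: "eps T tau (Some u) (Some u2)"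
      and r2: "(t2, u2) \<in> S" by blast
    from bb_halfD[OF hS r2 tr2] show ?thesis
    proof
      assume "l = tau \<and> (\<exists>m3. eps T tau (Some u2) (Some m3) \<and> (t2, m3) \<in> S \<and>
                       (\<exists>m1'. m2 = Some m1' \<and> (m1', m3) \<in> S))"
      then obtain v m2' where l: "l = tau" and e3: "eps T tau (Some u2) (Some v)"
        and r3: "(t2, v) \<in> S" and m2: "m2 = Some m2'" and r4: "(m2', v) \<in> S" by blast
      from mm m2 obtain a where a: "m1 = Some a" "(a, m2') \<in> R" by auto
      have ?A using l eps_trans[OF e2 e3] r1 r3 a r4 by blast
      then show ?thesis ..
    next
      assume "\<exists>s m3. eps T tau (Some u2) (Some s) \<and> T s l m3 \<and> (t2, s) \<in> S \<and>
        ((m2 = None \<and> m3 = None) \<or> (\<exists>a b. m2 = Some a \<and> m3 = Some b \<and> (a, b) \<in> S))"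
      then obtain w m3 where e3: "eps T tau (Some u2) (Some w)" and tr3: "T w l m3"
        and r3: "(t2, w) \<in> S"
        and mm2: "(m2 = None \<and> m3 = None) \<or> (\<exists>a b. m2 = Some a \<and> m3 = Some b \<and> (a, b) \<in> S)"
        by blast
      have "(m1 = None \<and> m3 = None) \<or> (\<exists>a b. m1 = Some a \<and> m3 = Some b \<and> (a, b) \<in> R O S)"
        using mm mm2 by auto
      then have ?B using eps_trans[OF e2 e3] tr3 r1 r3 by blast
      then show ?thesis ..
    qed
  qed
qed

lemma bbisim_conv: "bbisim S T tau R \<Longrightarrow> bbisim S T tau (R\<inverse>)"
  unfolding bbisim_def by auto

lemma bbisim_comp:
  assumes a: "bbisim S T tau R" and b: "bbisim S T tau R2"
  shows "bbisim S T tau (R O R2)"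
proof -
  have 1: "R O R2 \<subseteq> S \<times> S" using a b unfolding bbisim_def by blast
  have 2: "bb_half T tau (R O R2)" using a b unfolding bbisim_def by (blast intro: half_comp)
  have "bb_half T tau (R2\<inverse> O R\<inverse>)" using a b unfolding bbisim_def by (blast intro: half_comp)
  then have 3: "bb_half T tau ((R O R2)\<inverse>)" by (simp add: converse_relcomp)
  show ?thesis using 1 2 3 unfolding bbisim_def by blast
qed

lemma bbisimilar_sym: "sym (bbisimilar S T tau)"
proof (rule symI)
  fix x y assume "(x, y) \<in> bbisimilar S T tau"
  then obtain R where "bbisim S T tau R" "(x, y) \<in> R" unfolding bbisimilar_def by blast
  then have "bbisim S T tau (R\<inverse>)" "(y, x) \<in> R\<inverse>" using bbisim_conv by auto
  then show "(y, x) \<in> bbisimilar S T tau" unfolding bbisimilar_def by blast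
qed

lemma bbisimilar_trans: "trans (bbisimilar S T tau)"
proof (rule transI)
  fix x y z assume "(x, y) \<in> bbisimilar S T tau" "(y, z) \<in> bbisimilar S T tau"
  then obtain R R2 where "bbisim S T tau R" "(x, y) \<in> R" "bbisim S T tau R2" "(y, z) \<in> R2"
    unfolding bbisimilar_def by blast
  then have "bbisim S T tau (R O R2)" "(x, z) \<in> R O R2" using bbisim_comp by auto
  then show "(x, z) \<in> bbisimilar S T tau" unfolding bbisimilar_def by blast
qed

section \<open>Additive closure\<close>

lemma ac_plus: "(A, B) \<in> add_closure R \<Longrightarrow> (C, D) \<in> add_closure R \<Longrightarrow>
   (A + C, B + D) \<in> add_closure R"
  by (induction rule: add_closure.induct) (auto intro: add_closure.intros)

lemma ac_refl: "(\<forall>x\<in>#M. (x, x) \<in> R) \<Longrightarrow> (M, M) \<in> add_closure R"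
  by (induction M) (auto intro: add_closure.intros)

lemma ac_conv: "(A, B) \<in> add_closure R \<Longrightarrow> (B, A) \<in> add_closure (R\<inverse>)"
  by (induction rule: add_closure.induct) (auto intro: add_closure.intros)

lemma ac_conv_sym: "sym R \<Longrightarrow> (A, B) \<in> add_closure R \<Longrightarrow> (B, A) \<in> add_closure R"
  using ac_conv by (metis sym_conv_converse_eq)

lemma ac_exch: "(L, N) \<in> add_closure R \<Longrightarrow> L = add_mset x M \<Longrightarrow>
   \<exists>y N'. N = add_mset y N' \<and> (x, y) \<in> R \<and> (M, N') \<in> add_closure R"
proof (induction arbitrary: M rule: add_closure.induct)
  case ac_empty
  then show ?case by simp
next
  case (ac_add s1 s2 m1 m2)
  show ?case
  proof (cases "x = s1")
    case True
    then show ?thesis using ac_add by auto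
  next
    case False
    with ac_add.prems have "x \<in># m1"
      by (metis insert_noteq_member)
    then obtain m1'' where m1: "m1 = add_mset x m1''" by (metis mset_add)
    with ac_add.prems have M: "M = add_mset s1 m1''"
      by (metis add_mset_commute add_mset_remove_trivial)
    from ac_add.IH[OF m1] obtain y m2' where m2: "m2 = add_mset y m2'" and xy: "(x, y) \<in> R"
      and r: "(m1'', m2') \<in> add_closure R" by blast
    have e: "add_mset s2 m2 = add_mset y (add_mset s2 m2')" using m2 by (simp add: add_mset_commute)
    have "(M, add_mset s2 m2') \<in> add_closure R" unfolding M using ac_add.hyps(1) r
      by (rule add_closure.ac_add)
    then show ?thesis using e xy by blast
  qed
qed

lemma ac_replace:
  assumes "sym R" "trans R" "(P, add_mset x S) \<in> add_closure R" "(x, y) \<in> R"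
  shows "(P, add_mset y S) \<in> add_closure R"
proof -
  have "(add_mset x S, P) \<in> add_closure R" using assms ac_conv_sym by blast
  from ac_exch[OF this refl] obtain z P' where "P = add_mset z P'" "(x, z) \<in> R"
    "(S, P') \<in> add_closure R" by blast
  moreover have "(z, y) \<in> R" using assms(1,2,4) \<open>(x, z) \<in> R\<close>
    by (meson symD transD)
  ultimately show ?thesis
    using ac_conv_sym[OF assms(1)] by (auto intro: add_closure.intros)
qed

lemma ac_cancel:
  assumes "sym R" "trans R"
  shows "(M + A, M + B) \<in> add_closure R \<Longrightarrow> (A, B) \<in> add_closure R"
proof (induction M)
  case empty
  then show ?case by simp
next
  case (add x M0)
  from ac_exch[OF add.prems, of x "M0 + A"] obtain y N' where N: "add_mset x M0 + B = add_mset y N'"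
    and xy: "(x, y) \<in> R" and r: "(M0 + A, N') \<in> add_closure R"
    by auto
  show ?case
  proof (cases "y = x")
    case True
    then show ?thesis using N r add.IH by simp
  next
    case False
    have "y \<in># add_mset x M0 + B" using N by simp
    then have "y \<in># M0 + B" using False by simp
    then obtain S where S: "M0 + B = add_mset y S" by (metis mset_add)
    have "add_mset y N' = add_mset y (add_mset x S)" using N S by (simp add: add_mset_commute)
    then have "N' = add_mset x S" by simp
    then have "(M0 + A, add_mset y S) \<in> add_closure R"
      using ac_replace[OF assms] r xy by blast
    then show ?thesis using S add.IH by simp
  qed
qed



inductive_cases seqp_PreE: "seqp (Pre \<mu> p)"
inductive_cases guarded_PreE: "guarded (Pre \<mu> p)"
inductive_cases seqp_SumE: "seqp (Sum p q)"
inductive_cases guarded_SumE: "guarded (Sum p q)"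
inductive_cases seqp_ParE: "seqp (Par p q)"
inductive_cases guarded_ParE: "guarded (Par p q)"

lemma seqp_step: "step \<Delta> s \<mu> s' \<Longrightarrow> defs_ok \<Delta> \<Longrightarrow> seqp s \<Longrightarrow> seqp s'"
proof (induction rule: step.induct)
  case (st_pre \<mu> p)
  then show ?case by (auto elim: seqp_PreE guarded_PreE)
next
  case (st_cst C \<mu> p')
  then show ?case by (auto simp: defs_ok_def intro: s_grd)
next
  case (st_suml p \<mu> p' q)
  then show ?case by (auto elim!: seqp_SumE guarded_SumE intro: s_grd)
next
  case (st_sumr p \<mu> p' q)
  then show ?case by (auto elim!: seqp_SumE guarded_SumE intro: s_grd)
next
  case (st_parl p \<mu> p' q)
  then show ?case by (auto elim: seqp_ParE guarded_ParE)
next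
  case (st_parr p \<mu> p' q)
  then show ?case by (auto elim: seqp_ParE guarded_ParE)
qed

lemma seqp_dec: "seqp x \<Longrightarrow> dec x = {#} \<or> dec x = {#x#}"
  by (cases x) (auto elim: seqp_ParE guarded_ParE)

lemma dec_nonnil: "x \<in># dec p \<Longrightarrow> x \<noteq> PNil"
  by (induction p) auto

lemma dec_elem: "x \<in># dec p \<Longrightarrow> dec x = {#x#}"
  by (induction p) auto

lemma parp_dec: "parp p \<Longrightarrow> \<forall>x\<in>#dec p. seqp x"
  by (induction rule: parp.induct) (use seqp_dec in fastforce)+

lemma step_dec: "step \<Delta> p \<mu> p1 \<Longrightarrow>
  \<exists>q q1 M. dec p = add_mset q M \<and> step \<Delta> q \<mu> q1 \<and> dec p1 = M + dec q1"
proof (induction rule: step.induct)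
  case (st_pre \<mu> p)
  then show ?case by (auto intro: step.intros)
next
  case (st_cst C \<mu> p')
  then show ?case by (auto intro: step.intros)
next
  case (st_suml p \<mu> p' q)
  then show ?case by (auto intro: step.intros)
next
  case (st_sumr p \<mu> p' q)
  then show ?case by (auto intro: step.intros)
next
  case (st_parl p \<mu> p' q)
  then obtain q0 q1 M where "dec p = add_mset q0 M" "step \<Delta> q0 \<mu> q1" "dec p' = M + dec q1"
    by blast
  then show ?case by (intro exI[of _ q0] exI[of _ q1] exI[of _ "M + dec q"]) auto
next
  case (st_parr p \<mu> p' q)
  then obtain q0 q1 M where "dec p = add_mset q0 M" "step \<Delta> q0 \<mu> q1" "dec p' = M + dec q1"
    by blast
  then show ?case by (intro exI[of _ q0] exI[of _ q1] exI[of _ "dec q + M"]) auto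
qed

lemma reach_parl: "reach \<Delta> a b \<Longrightarrow> reach \<Delta> (Par a c) (Par b c)"
  unfolding reach_def
proof (induction rule: rtranclp_induct)
  case base then show ?case by simp
next
  case (step y z)
  then show ?case by (blast intro: rtranclp.rtrancl_into_rtrancl st_parl)
qed

lemma reach_parr: "reach \<Delta> a b \<Longrightarrow> reach \<Delta> (Par c a) (Par c b)"
  unfolding reach_def
proof (induction rule: rtranclp_induct)
  case base then show ?case by simp
next
  case (step y z)
  then show ?case by (blast intro: rtranclp.rtrancl_into_rtrancl st_parr)
qed

lemma lift: "q \<in># dec p \<Longrightarrow> reach \<Delta> q q' \<Longrightarrow>
  \<exists>p' M. dec p = add_mset q M \<and> reach \<Delta> p p' \<and> dec p' = M + dec q' \<and>
    (\<forall>\<mu> q''. step \<Delta> q' \<mu> q'' \<longrightarrow> (\<exists>p''. step \<Delta> p' \<mu> p'' \<and> dec p'' = M + dec q''))"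
proof (induction p)
  case PNil
  then show ?case by simp
next
  case (Pre x1 p)
  then show ?case by (intro exI[of _ q'] exI[of _ "{#}"]) auto
next
  case (Sum p1 p2)
  then show ?case by (intro exI[of _ q'] exI[of _ "{#}"]) auto
next
  case (Cst x)
  then show ?case by (intro exI[of _ q'] exI[of _ "{#}"]) auto
next
  case (Par p1 p2)
  show ?case
  proof (cases "q \<in># dec p1")
    case True
    from Par.IH(1)[OF True Par.prems(2)] obtain p' M where
      a: "dec p1 = add_mset q M" "reach \<Delta> p1 p'" "dec p' = M + dec q'"
      "\<forall>\<mu> q''. step \<Delta> q' \<mu> q'' \<longrightarrow> (\<exists>p''. step \<Delta> p' \<mu> p'' \<and> dec p'' = M + dec q'')"
      by blast
    show ?thesis
    proof (rule exI[of _ "Par p' p2"], rule exI[of _ "M + dec p2"], intro conjI allI impI)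
      fix \<mu> q'' assume "step \<Delta> q' \<mu> q''"
      with a(4) obtain p'' where "step \<Delta> p' \<mu> p''" "dec p'' = M + dec q''" by blast
      then show "\<exists>p''a. step \<Delta> (Par p' p2) \<mu> p''a \<and> dec p''a = M + dec p2 + dec q''"
        by (intro exI[of _ "Par p'' p2"]) (auto intro: st_parl)
    qed (use a reach_parl in auto)
  next
    case False
    then have T: "q \<in># dec p2" using Par.prems(1) by simp
    from Par.IH(2)[OF T Par.prems(2)] obtain p' M where
      a: "dec p2 = add_mset q M" "reach \<Delta> p2 p'" "dec p' = M + dec q'"
      "\<forall>\<mu> q''. step \<Delta> q' \<mu> q'' \<longrightarrow> (\<exists>p''. step \<Delta> p' \<mu> p'' \<and> dec p'' = M + dec q'')"
      by blast
    show ?thesis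
    proof (rule exI[of _ "Par p1 p'"], rule exI[of _ "dec p1 + M"], intro conjI allI impI)
      fix \<mu> q'' assume "step \<Delta> q' \<mu> q''"
      with a(4) obtain p'' where "step \<Delta> p' \<mu> p''" "dec p'' = M + dec q''" by blast
      then show "\<exists>p''a. step \<Delta> (Par p1 p') \<mu> p''a \<and> dec p''a = dec p1 + M + dec q''"
        by (intro exI[of _ "Par p1 p''"]) (auto intro: st_parr)
    qed (use a reach_parr in auto)
  qed
qed

lemma reach_inv:
  assumes ok: "defs_ok \<Delta>" and p0: "\<forall>x\<in>#dec p. seqp x" and rp: "reach \<Delta> p p'"
  shows "(\<forall>x\<in>#dec p'. seqp x) \<and> (\<forall>x\<in>#dec p'. \<exists>q\<in>#dec p. reach \<Delta> q x)"
  using rp unfolding reach_def[of \<Delta>]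
proof (induction rule: rtranclp_induct)
  case base
  then show ?case using p0 by auto
next
  case (step y z)
  then obtain \<mu> where st: "step \<Delta> y \<mu> z" by blast
  from step_dec[OF st] obtain q q1 M where d: "dec y = add_mset q M" "step \<Delta> q \<mu> q1"
    "dec z = M + dec q1" by blast
  have IH: "\<forall>x\<in>#dec y. seqp x" "\<forall>x\<in>#dec y. \<exists>q\<in>#dec p. (\<lambda>p q. \<exists>\<mu>. step \<Delta> p \<mu> q)\<^sup>*\<^sup>* q x"
    using step by auto
  have sq: "seqp q" using IH(1) d(1) by simp
  have sq1: "seqp q1" using seqp_step[OF d(2) ok sq] .
  have dq1: "\<forall>x\<in>#dec q1. x = q1" using seqp_dec[OF sq1] by auto
  have rq: "\<exists>q0\<in>#dec p. (\<lambda>p q. \<exists>\<mu>. step \<Delta> p \<mu> q)\<^sup>*\<^sup>* q0 q1"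
  proof -
    from IH(2) d(1) obtain q0 where "q0 \<in># dec p" "(\<lambda>p q. \<exists>\<mu>. step \<Delta> p \<mu> q)\<^sup>*\<^sup>* q0 q"
      by auto
    then show ?thesis using d(2) by (blast intro: rtranclp.rtrancl_into_rtrancl)
  qed
  show ?case
  proof (intro conjI ballI)
    fix x assume "x \<in># dec z"
    then have "x \<in># M \<or> x = q1" using d(3) dq1 by auto
    then show "seqp x" using IH(1) d(1) sq1 by auto
  next
    fix x assume "x \<in># dec z"
    then have "x \<in># M \<or> x = q1" using d(3) dq1 by auto
    then show "\<exists>q\<in>#dec p. (\<lambda>p q. \<exists>\<mu>. step \<Delta> p \<mu> q)\<^sup>*\<^sup>* q x"
      using IH(2) d(1) rq by auto
  qed
qed

lemma Id_bbisim:
  assumes ok: "defs_ok \<Delta>"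
  shows "bbisim places (rtrans \<Delta> H) Tau (Id_on places)"
  unfolding bbisim_def
proof (intro conjI)
  have h: "bb_half (rtrans \<Delta> H) Tau (Id_on places)"
  proof (rule bb_halfI)
    fix s1 s2 l m1 assume a: "(s1, s2) \<in> Id_on places" "rtrans \<Delta> H s1 l m1"
    then obtain s' where s1: "s1 \<in> places" and st: "step \<Delta> s1 l s'" and m: "m1 = tgt s'"
      unfolding rtrans_def by blast
    from s1 have "seqp s1" unfolding places_def by simp
    from seqp_step[OF st ok this] have "seqp s'" .
    have mm: "m1 = None \<or> (\<exists>a. m1 = Some a \<and> a \<in> places)"
      using m \<open>seqp s'\<close> unfolding tgt_def places_def by auto
    show "(l = Tau \<and> (\<exists>m2. eps (rtrans \<Delta> H) Tau (Some s2) (Some m2) \<and> (s1, m2) \<in> Id_on places \<and>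
                       (\<exists>m1'. m1 = Some m1' \<and> (m1', m2) \<in> Id_on places)))
   \<or> (\<exists>s m2. eps (rtrans \<Delta> H) Tau (Some s2) (Some s) \<and> rtrans \<Delta> H s l m2 \<and> (s1, s) \<in> Id_on places \<and>
        ((m1 = None \<and> m2 = None) \<or> (\<exists>a b. m1 = Some a \<and> m2 = Some b \<and> (a, b) \<in> Id_on places)))"
    proof (rule disjI2, rule exI[of _ s2], rule exI[of _ m1], intro conjI)
      show "eps (rtrans \<Delta> H) Tau (Some s2) (Some s2)" by (rule eps_refl)
      show "rtrans \<Delta> H s2 l m1" using a by auto
      show "(s1, s2) \<in> Id_on places" using a(1) .
      show "m1 = None \<and> m1 = None \<or> (\<exists>a b. m1 = Some a \<and> m1 = Some b \<and> (a, b) \<in> Id_on places)"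
        using mm by auto
    qed
  qed
  show "Id_on places \<subseteq> places \<times> places" by auto
  show "bb_half (rtrans \<Delta> H) Tau (Id_on places)" using h .
  show "bb_half (rtrans \<Delta> H) Tau ((Id_on places)\<inverse>)" using h by simp
qed

lemma bbisimilar_refl: "defs_ok \<Delta> \<Longrightarrow> x \<in> places \<Longrightarrow> (x, x) \<in> bbisimilar places (rtrans \<Delta> H) Tau"
proof -
  assume ok: "defs_ok \<Delta>" and x: "x \<in> places"
  have "(x, x) \<in> Id_on places" using x by auto
  then show ?thesis unfolding bbisimilar_def using Id_bbisim[OF ok, of H] by auto
qed

theorem corollary4p1:
  fixes \<Delta> :: "'c::finite \<Rightarrow> ('a::finite, 'c) proc"
    and H :: "'a set"
    and p :: "('a, 'c) proc"
  assumes "cfm \<Delta> p"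
  shows "DNI \<Delta> H p \<longleftrightarrow> (\<forall>q \<in> set_mset (dec p). DNI \<Delta> H q)"
proof -
  have ok: "defs_ok \<Delta>" and pp: "parp p" using assms unfolding cfm_def by auto
  let ?R = "bbisimilar places (rtrans \<Delta> H) Tau"
  have L: "DNI \<Delta> H p" if all: "\<forall>q \<in> set_mset (dec p). DNI \<Delta> H q"
    unfolding DNI_def[of \<Delta> H p]
  proof (intro allI impI)
    fix p' p'' h
    assume r: "reach \<Delta> p p'" and hH: "h \<in> H" and st: "step \<Delta> p' (Vis h) p''"
    from reach_inv[OF ok parp_dec[OF pp] r] have
      inv: "\<forall>x\<in>#dec p'. seqp x" "\<forall>x\<in>#dec p'. \<exists>q\<in>#dec p. reach \<Delta> q x" by auto
    from step_dec[OF st] obtain q' q1 M where d: "dec p' = add_mset q' M"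
      "step \<Delta> q' (Vis h) q1" "dec p'' = M + dec q1" by blast
    from inv(2) d(1) obtain q where qd: "q \<in># dec p" and rq: "reach \<Delta> q q'" by auto
    have "DNI \<Delta> H q" using all qd by blast
    then have t: "(dec q', dec q1) \<in> rteam \<Delta> H" using rq hH d(2) unfolding DNI_def by blast
    have dq: "dec q' = {#q'#}" using dec_elem[of q' p'] d(1) by simp
    have "\<forall>x\<in>#M. (x, x) \<in> ?R"
    proof
      fix x assume "x \<in># M"
      then have "x \<in># dec p'" using d(1) by simp
      then have "x \<in> places" using inv(1) dec_nonnil[of x p'] unfolding places_def by simp
      then show "(x, x) \<in> ?R" using bbisimilar_refl[OF ok] by blast
    qed
    then have "(M, M) \<in> add_closure ?R" by (rule ac_refl)
    from ac_plus[OF this t[unfolded rteam_def]]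
    show "(dec p', dec p'') \<in> rteam \<Delta> H"
      unfolding rteam_def using d dq by simp
  qed
  have Rr: "\<forall>q \<in> set_mset (dec p). DNI \<Delta> H q" if dp: "DNI \<Delta> H p"
    unfolding DNI_def
  proof (intro ballI allI impI)
    fix q q' q'' h
    assume q: "q \<in># dec p" and r: "reach \<Delta> q q'" and hH: "h \<in> H"
      and st: "step \<Delta> q' (Vis h) q''"
    from lift[OF q r] obtain p' M where a: "dec p = add_mset q M" "reach \<Delta> p p'" "dec p' = M + dec q'"
      "\<forall>\<mu> q''. step \<Delta> q' \<mu> q'' \<longrightarrow> (\<exists>p''. step \<Delta> p' \<mu> p'' \<and> dec p'' = M + dec q'')"
      by (elim exE conjE) (rule that)
    from a(4)[rule_format, OF st] obtain p'' where s2: "step \<Delta> p' (Vis h) p''" and d2: "dec p'' = M + dec q''"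
      by blast
    have "(dec p', dec p'') \<in> rteam \<Delta> H"
      using dp[unfolded DNI_def, rule_format, OF a(2) hH s2] .
    then have c0: "(M + dec q', M + dec q'') \<in> rteam \<Delta> H" using a(3) d2 by simp
    show "(dec q', dec q'') \<in> rteam \<Delta> H"
    proof -
      have c: "(M + dec q', M + dec q'') \<in> add_closure ?R" using c0 unfolding rteam_def .
      have sy: "sym ?R" by (rule bbisimilar_sym)
      have tr: "trans ?R" by (rule bbisimilar_trans)
      show ?thesis unfolding rteam_def using ac_cancel[OF sy tr c] .
    qed
  qed
  from L Rr show ?thesis by blast
qed

end
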